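(* Under the setting and assumptions described in the context, suppose that every subgradient returned by the oracle during the run of Algorithm MD is nonzero, and that the algorithm stops after $N$ iterations, where $N$ is the smallest positive integer with $$\sum_{i=0}^{N-1}\frac{1}{M_i^2}\ \ge\ \frac{2\Theta_0^2}{\varepsilon^2}.$$ Then the index set $I\subseteq\{0,\dots,N-1\}$ of "productive" steps is nonempty, so the output $\bar x^N=\big(\sum_{i\in I}h_i x^i\big)/\big(\sum_{i\in I}h_i\big)$ is well defined, and it satisfies $$f(\bar x^N)-f(x_* )\le\varepsilon,\qquad g(\bar x^N)\le\varepsilon .$$ Moreover, if $M>0$ is defined by $\frac{N}{M^2}=\sum_{i=0}^{N-1}\frac{1}{M_i^2}$ (an "averaged" subgradient norm replacing the global Lipschitz constant), then $N=\big\lceil 2M^2\Theta_0^2/\varepsilon^2\big\rceil$ in the sense that $N\ge 2M^2\Theta_0^2/\varepsilon^2$ with $N$ the first index at which the stopping criterion is met.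
   Context: Let $E$ be an $n$-dimensional real vector space with an arbitrary norm $\|\cdot\|$ and dual norm $\|\xi\|_*=\max\{\langle\xi,x\rangle:\|x\|\le1\}$ on $E^*$. Let $\mathcal X\subset E$ be a closed convex set, and let $f,g:\mathcal X\to\mathbb R$ be convex, subdifferentiable (at every point of $\mathcal X$ they have a subgradient with finite dual norm) and Lipschitz continuous. Consider the problem: minimize $f(x)$ over $x\in\mathcal X$ subject to $g(x)\le 0$, and let $x_*$ be a solution of it (so $g(x_* )\le0$ and $f(x_* )\le f(x)$ for all feasible $x$). A first-order oracle returns, for $x\in\mathcal X$, a subgradient $\nabla f(x)$ of $f$, a subgradient $\nabla g(x)$ of $g$, and the value $g(x)$. Let $d:\mathcal X\to\mathbb R$ (distance generating function) be continuously differentiable and 1-strongly convex w.r.t. $\|\cdot\|$, i.e. $\langle d'(x)-d'(y),x-y\rangle\ge\|x-y\|^2$ for all $x,y\in\mathcal X$, with a minimizer $x^0=\arg\min_{x\in\mathcal X}d(x)$. Let $\Theta_0>0$ satisfy $d(x_* )-d(x^0)\le\Theta_0^2$. The Bregman divergence is $V(x,y)=d(y)-d(x)-\langle d'(x),y-x\rangle$, and the proximal mapping is $\mathrm{Mirr}_x(y)=\arg\min_{u\in\mathcal X}\{\langle y,u\rangle+V(x,u)\}$ for $x\in\mathcal X$, $y\in E^*$. Algorithm MD (input $\varepsilon>0$, $\Theta_0^2$, $d$, $\mathcal X$): start at $x^0=\arg\min_{\mathcal X}d$, $I=\emptyset$. For $i=0,1,2,\dots$: if $g(x^i)\le\varepsilon$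 ("productive step"), set $M_i=\|\nabla f(x^i)\|_*$, $h_i=\varepsilon/M_i^2$, $x^{i+1}=\mathrm{Mirr}_{x^i}(h_i\nabla f(x^i))$ and add $i$ to $I$; otherwise ("non-productive step"), set $M_i=\|\nabla g(x^i)\|_*$, $h_i=\varepsilon/M_i^2$, $x^{i+1}=\mathrm{Mirr}_{x^i}(h_i\nabla g(x^i))$. Stop after iteration $N-1$, where $N$ is the first integer with $\sum_{i=0}^{N-1}M_i^{-2}\ge 2\Theta_0^2/\varepsilon^2$, and output $\bar x^N=\sum_{i\in I}h_ix^i/\sum_{i\in I}h_i$. *)

theory Defs
  imports "HOL-Analysis.Analysis"
begin

text \<open>The space E is modelled by a finite-dimensional type 'a::euclidean_space; the
  dual space E* is identified with E via the inner product, so a linear functional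
  xi acts as x |-> xi \<bullet> x.  The (arbitrary) norm of E is a separate function nrm.\<close>

definition is_norm :: "('a::real_vector \<Rightarrow> real) \<Rightarrow> bool" where
  "is_norm nrm \<longleftrightarrow>
     (\<forall>x. 0 \<le> nrm x) \<and> (\<forall>x. nrm x = 0 \<longleftrightarrow> x = 0) \<and>
     (\<forall>c x. nrm (c *\<^sub>R x) = \<bar>c\<bar> * nrm x) \<and>
     (\<forall>x y. nrm (x + y) \<le> nrm x + nrm y)"

definition dual_norm :: "('a::euclidean_space \<Rightarrow> real) \<Rightarrow> 'a \<Rightarrow> real" where
  "dual_norm nrm \<xi> = Sup {\<xi> \<bullet> x | x. nrm x \<le> 1}"

definition bregman :: "('a::euclidean_space \<Rightarrow> real) \<Rightarrow> ('a \<Rightarrow> 'a) \<Rightarrow> 'a \<Rightarrow> 'a \<Rightarrow> real" where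
  "bregman d d' x y = d y - d x - d' x \<bullet> (y - x)"

definition mirr :: "'a set \<Rightarrow> ('a::euclidean_space \<Rightarrow> real) \<Rightarrow> ('a \<Rightarrow> 'a) \<Rightarrow> 'a \<Rightarrow> 'a \<Rightarrow> 'a" where
  "mirr X d d' x y = (SOME u. u \<in> X \<and>
      (\<forall>v\<in>X. y \<bullet> u + bregman d d' x u \<le> y \<bullet> v + bregman d d' x v))"

definition md_dir :: "real \<Rightarrow> ('a \<Rightarrow> real) \<Rightarrow> ('a \<Rightarrow> 'a) \<Rightarrow> ('a \<Rightarrow> 'a) \<Rightarrow> 'a \<Rightarrow> 'a" where
  "md_dir eps g df dg x = (if g x \<le> eps then df x else dg x)"

primrec md_iter :: "real \<Rightarrow> 'a set \<Rightarrow> ('a::euclidean_space \<Rightarrow> real) \<Rightarrow> ('a \<Rightarrow> 'a)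
    \<Rightarrow> ('a \<Rightarrow> real) \<Rightarrow> ('a \<Rightarrow> real) \<Rightarrow> ('a \<Rightarrow> 'a) \<Rightarrow> ('a \<Rightarrow> 'a) \<Rightarrow> 'a \<Rightarrow> nat \<Rightarrow> 'a" where
  "md_iter eps X d d' nrm g df dg x0 0 = x0"
| "md_iter eps X d d' nrm g df dg x0 (Suc i) =
     (let x = md_iter eps X d d' nrm g df dg x0 i;
          s = md_dir eps g df dg x;
          h = eps / (dual_norm nrm s)\<^sup>2
      in mirr X d d' x (h *\<^sub>R s))"

end

theory Submission
  imports Defs
begin

lemma nrm_basic:
  assumes "is_norm nrm"
  shows "nrm 0 = 0" "nrm (-x) = nrm x" "nrm (x - y) = nrm (y - x)"
    "nrm (x + y) \<le> nrm x + nrm y" "0 \<le> nrm x"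
proof -
  show "nrm 0 = 0" using assms unfolding is_norm_def by auto
  have sc: "nrm (c *\<^sub>R z) = \<bar>c\<bar> * nrm z" for c z using assms unfolding is_norm_def by blast
  show "nrm (-x) = nrm x" using sc[of "-1" x] by simp
  show "nrm (x - y) = nrm (y - x)" using sc[of "-1" "y - x"] by simp
  show "nrm (x + y) \<le> nrm x + nrm y" "0 \<le> nrm x" using assms unfolding is_norm_def by auto
qed

lemma nrm_sum:
  assumes "is_norm nrm" "finite S"
  shows "nrm (\<Sum>i\<in>S. v i) \<le> (\<Sum>i\<in>S. nrm (v i))"
  using assms(2)
proof (induction S rule: finite_induct)
  case empty then show ?case using nrm_basic[OF assms(1)] by simp
next
  case (insert a F)
  then show ?case using nrm_basic(4)[OF assms(1), of "v a" "sum v F"] by simp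
qed

lemma nrm_upper:
  fixes nrm :: "'a::euclidean_space \<Rightarrow> real"
  assumes "is_norm nrm"
  shows "\<exists>C\<ge>0. \<forall>x. nrm x \<le> C * norm x"
proof -
  define C where "C = (\<Sum>b\<in>(Basis::'a set). nrm b)"
  have C0: "C \<ge> 0" unfolding C_def by (intro sum_nonneg) (simp add: nrm_basic[OF assms])
  have "nrm x \<le> C * norm x" for x
  proof -
    have "nrm x = nrm (\<Sum>b\<in>Basis. (x \<bullet> b) *\<^sub>R b)" by (simp add: euclidean_representation)
    also have "\<dots> \<le> (\<Sum>b\<in>Basis. nrm ((x \<bullet> b) *\<^sub>R b))" by (rule nrm_sum[OF assms]) simp
    also have "\<dots> = (\<Sum>b\<in>Basis. \<bar>x \<bullet> b\<bar> * nrm b)"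
      using assms unfolding is_norm_def by simp
    also have "\<dots> \<le> (\<Sum>b\<in>Basis. norm x * nrm b)"
      by (intro sum_mono mult_right_mono) (auto simp: Basis_le_norm nrm_basic[OF assms])
    also have "\<dots> = C * norm x" by (simp add: C_def sum_distrib_left mult.commute)
    finally show ?thesis .
  qed
  with C0 show ?thesis by blast
qed

lemma nrm_lower:
  fixes nrm :: "'a::euclidean_space \<Rightarrow> real"
  assumes "is_norm nrm"
  shows "\<exists>c>0. \<forall>x. c * norm x \<le> nrm x"
proof -
  obtain C where C: "C \<ge> 0" "\<And>x. nrm x \<le> C * norm x" using nrm_upper[OF assms] by blast
  have "C-lipschitz_on UNIV nrm"
  proof (rule lipschitz_onI)
    fix x y :: 'a
    have "nrm x \<le> nrm y + nrm (x - y)" using nrm_basic(4)[OF assms, of y "x - y"] by simp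
    moreover have "nrm y \<le> nrm x + nrm (y - x)" using nrm_basic(4)[OF assms, of x "y - x"] by simp
    moreover have "nrm (x - y) \<le> C * dist x y" using C(2)[of "x - y"] by (simp add: dist_norm)
    moreover have "nrm (y - x) = nrm (x - y)" using nrm_basic(3)[OF assms] by simp
    ultimately show "dist (nrm x) (nrm y) \<le> C * dist x y" by (simp add: dist_real_def abs_le_iff)
  qed (use C in auto)
  then have cont: "continuous_on (sphere 0 1) nrm"
    using lipschitz_on_continuous_on lipschitz_on_subset by blast
  obtain b :: 'a where b: "b \<in> Basis" using nonempty_Basis by blast
  have ne: "sphere (0::'a) 1 \<noteq> {}" using b by (auto intro!: exI[of _ b])
  obtain z where z: "z \<in> sphere 0 1" "\<And>y. y \<in> sphere 0 1 \<Longrightarrow> nrm z \<le> nrm y"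
    using continuous_attains_inf[OF compact_sphere ne cont] by blast
  have "z \<noteq> 0" using z(1) by auto
  then have zpos: "nrm z > 0" using assms unfolding is_norm_def by (metis less_eq_real_def)
  have "nrm z * norm x \<le> nrm x" for x
  proof (cases "x = 0")
    case True then show ?thesis by (simp add: nrm_basic[OF assms])
  next
    case False
    have "nrm z \<le> nrm ((1 / norm x) *\<^sub>R x)" using False by (intro z(2)) simp
    also have "\<dots> = nrm x / norm x" using assms unfolding is_norm_def by simp
    finally show ?thesis using False by (simp add: field_simps)
  qed
  with zpos show ?thesis by blast
qed

lemma dual_norm_prop:
  fixes nrm :: "'a::euclidean_space \<Rightarrow> real"
  assumes "is_norm nrm"
  shows "\<xi> \<bullet> x \<le> dual_norm nrm \<xi> * nrm x" "0 \<le> dual_norm nrm \<xi>"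
    "\<xi> \<noteq> 0 \<Longrightarrow> 0 < dual_norm nrm \<xi>"
proof -
  obtain c where c: "c > 0" "\<And>x. c * norm x \<le> nrm x" using nrm_lower[OF assms] by blast
  let ?S = "{\<xi> \<bullet> x | x. nrm x \<le> 1}"
  have bdd: "bdd_above ?S"
  proof (rule bdd_aboveI)
    fix r assume "r \<in> ?S"
    then obtain x where x: "r = \<xi> \<bullet> x" "nrm x \<le> 1" by blast
    have "r \<le> norm \<xi> * norm x" using x(1) norm_cauchy_schwarz by auto
    also have "\<dots> \<le> norm \<xi> * (1 / c)"
    proof (rule mult_left_mono)
      show "norm x \<le> 1 / c" using c(2)[of x] x(2) c(1) by (simp add: field_simps)
    qed simp
    finally show "r \<le> norm \<xi> * (1 / c)" .
  qed
  have mem: "\<xi> \<bullet> y \<le> dual_norm nrm \<xi>" if "nrm y \<le> 1" for y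
    unfolding dual_norm_def by (rule cSup_upper[OF _ bdd]) (use that in blast)
  show "0 \<le> dual_norm nrm \<xi>" using mem[of 0] by (simp add: nrm_basic[OF assms])
  show "\<xi> \<bullet> x \<le> dual_norm nrm \<xi> * nrm x"
  proof (cases "x = 0")
    case True then show ?thesis by (simp add: nrm_basic[OF assms])
  next
    case False
    then have np: "nrm x > 0" using assms unfolding is_norm_def by (metis less_eq_real_def)
    have "\<xi> \<bullet> ((1 / nrm x) *\<^sub>R x) \<le> dual_norm nrm \<xi>"
      apply (rule mem) using assms np unfolding is_norm_def by simp
    then show ?thesis using np by (simp add: field_simps)
  qed
  assume "\<xi> \<noteq> 0"
  then have np: "nrm \<xi> > 0" using assms unfolding is_norm_def by (metis less_eq_real_def)
  have "\<xi> \<bullet> ((1 / nrm \<xi>) *\<^sub>R \<xi>) \<le> dual_norm nrm \<xi>"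
    apply (rule mem) using assms np unfolding is_norm_def by simp
  moreover have "\<xi> \<bullet> ((1 / nrm \<xi>) *\<^sub>R \<xi>) > 0" using np \<open>\<xi> \<noteq> 0\<close> by simp
  ultimately show "0 < dual_norm nrm \<xi>" by linarith
qed


lemma deriv_line:
  fixes d :: "'a::euclidean_space \<Rightarrow> real"
  assumes dd: "\<forall>z\<in>X. (d has_derivative (\<lambda>v. d' z \<bullet> v)) (at z within X)"
    and X: "convex X" and x: "x \<in> X" and y: "y \<in> X" and t: "t \<in> {0..1}"
  shows "((\<lambda>s. d (x + s *\<^sub>R (y - x))) has_real_derivative (d' (x + t *\<^sub>R (y - x)) \<bullet> (y - x))) (at t within {0..1})"
proof -
  define p where "p = (\<lambda>s::real. x + s *\<^sub>R (y - x))"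
  have pin: "p s \<in> X" if "s \<in> {0..1}" for s
  proof -
    have "p s = (1 - s) *\<^sub>R x + s *\<^sub>R y" by (simp add: p_def algebra_simps)
    then show ?thesis using that X x y by (auto simp: convex_def)
  qed
  have pd: "(p has_derivative (\<lambda>s. s *\<^sub>R (y - x))) (at t within {0..1})"
    unfolding p_def by (auto intro!: derivative_eq_intros)
  have "(d has_derivative (\<lambda>v. d' (p t) \<bullet> v)) (at (p t) within X)" using dd pin t by blast
  then have "(d has_derivative (\<lambda>v. d' (p t) \<bullet> v)) (at (p t) within p ` {0..1})"
    by (rule has_derivative_subset) (use pin in auto)
  from diff_chain_within[OF pd this]
  have "((d \<circ> p) has_derivative ((\<lambda>v. d' (p t) \<bullet> v) \<circ> (\<lambda>s. s *\<^sub>R (y - x)))) (at t within {0..1})" .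
  moreover have "((\<lambda>v. d' (p t) \<bullet> v) \<circ> (\<lambda>s. s *\<^sub>R (y - x))) = (*) (d' (p t) \<bullet> (y - x))"
    by (auto simp: fun_eq_iff)
  ultimately show ?thesis unfolding has_field_derivative_def p_def by (simp add: comp_def)
qed

lemma min_deriv:
  fixes \<phi> :: "real \<Rightarrow> real"
  assumes "(\<phi> has_real_derivative D) (at 0 within {0..1})" "\<And>t. t \<in> {0..1} \<Longrightarrow> \<phi> 0 \<le> \<phi> t"
  shows "0 \<le> D"
proof -
  have lim: "((\<lambda>y. (\<phi> y - \<phi> 0) / (y - 0)) \<longlongrightarrow> D) (at_right 0)"
    using assms(1) unfolding has_field_derivative_iff by (simp add: at_within_Icc_at_right)
  have ev: "eventually (\<lambda>y. y \<in> {0<..<1}) (at_right (0::real))"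
    by (rule eventually_at_right_real) simp
  have "eventually (\<lambda>y. 0 \<le> (\<phi> y - \<phi> 0) / (y - 0)) (at_right 0)"
    using ev by eventually_elim (use assms(2) in auto)
  then show ?thesis by (rule tendsto_lowerbound[OF lim]) simp
qed

lemma bregman_strong:
  fixes d :: "'a::euclidean_space \<Rightarrow> real"
  assumes dd: "\<forall>z\<in>X. (d has_derivative (\<lambda>v. d' z \<bullet> v)) (at z within X)"
    and X: "convex X" and x: "x \<in> X" and u: "u \<in> X"
    and ds: "\<forall>x\<in>X. \<forall>y\<in>X. (d' x - d' y) \<bullet> (x - y) \<ge> (nrm (x - y))\<^sup>2"
    and norm: "is_norm nrm"
  shows "bregman d d' x u \<ge> (nrm (u - x))\<^sup>2 / 2"
proof -
  define w where "w = u - x"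
  define n where "n = nrm w"
  define p where "p = (\<lambda>s::real. x + s *\<^sub>R w)"
  have pin: "p s \<in> X" if "s \<in> {0..1}" for s
  proof -
    have "p s = (1 - s) *\<^sub>R x + s *\<^sub>R u" by (simp add: p_def w_def algebra_simps)
    then show ?thesis using that X x u by (auto simp: convex_def)
  qed
  define \<psi> where "\<psi> = (\<lambda>s. d (p s) - s * (d' x \<bullet> w) - s\<^sup>2 * n\<^sup>2 / 2)"
  have der: "(\<psi> has_real_derivative (d' (p s) \<bullet> w - d' x \<bullet> w - s * n\<^sup>2)) (at s within {0..1})"
    if "s \<in> {0..1}" for s
  proof -
    have "((\<lambda>s. d (p s)) has_real_derivative (d' (p s) \<bullet> w)) (at s within {0..1})"
      using deriv_line[OF dd X x u that] by (simp add: p_def w_def)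
    then show ?thesis unfolding \<psi>_def
      by (auto intro!: derivative_eq_intros simp: power2_eq_square)
  qed
  have "\<psi> 0 \<le> \<psi> 1"
  proof (rule DERIV_nonneg_imp_increasing_open[of 0 1])
    show "continuous_on {0..1} \<psi>" using der by (intro DERIV_continuous_on) blast
    fix s :: real assume s: "0 < s" "s < 1"
    have "interior {0..1::real} = {0<..<1}" by simp
    then have "at s within {0..1} = at s" using s by (intro at_within_interior) simp
    then have D: "(\<psi> has_real_derivative (d' (p s) \<bullet> w - d' x \<bullet> w - s * n\<^sup>2)) (at s)"
      using der[of s] s by simp
    have "(d' (p s) - d' x) \<bullet> (p s - x) \<ge> (nrm (p s - x))\<^sup>2"
      using ds pin[of s] x s by auto
    moreover have "p s - x = s *\<^sub>R w" by (simp add: p_def)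
    moreover have "nrm (s *\<^sub>R w) = s * n" using norm s unfolding is_norm_def n_def by simp
    ultimately have "s * ((d' (p s) - d' x) \<bullet> w) \<ge> s * (s * n\<^sup>2)"
      by (simp add: power2_eq_square algebra_simps)
    then have "(d' (p s) - d' x) \<bullet> w \<ge> s * n\<^sup>2" using s by simp
    then have "d' (p s) \<bullet> w - d' x \<bullet> w - s * n\<^sup>2 \<ge> 0" by (simp add: inner_diff_left)
    with D show "\<exists>y. (\<psi> has_real_derivative y) (at s) \<and> 0 \<le> y" by blast
  qed simp
  then show ?thesis
    unfolding \<psi>_def p_def bregman_def n_def w_def by simp
qed


lemma mirr_prop:
  fixes d :: "'a::euclidean_space \<Rightarrow> real"
  assumes dd: "\<forall>z\<in>X. (d has_derivative (\<lambda>v. d' z \<bullet> v)) (at z within X)"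
    and Xc: "closed X" and X: "convex X" and x: "x \<in> X"
    and ds: "\<forall>x\<in>X. \<forall>y\<in>X. (d' x - d' y) \<bullet> (x - y) \<ge> (nrm (x - y))\<^sup>2"
    and norm: "is_norm nrm"
  shows "mirr X d d' x y \<in> X \<and>
         (\<forall>v\<in>X. (y + d' (mirr X d d' x y) - d' x) \<bullet> (v - mirr X d d' x y) \<ge> 0)"
proof -
  define F where "F = (\<lambda>u. y \<bullet> u + bregman d d' x u)"
  have dcont: "continuous_on X d"
    unfolding continuous_on_eq_continuous_within
    using dd has_derivative_continuous by blast
  have Fcont: "continuous_on X F"
    unfolding F_def bregman_def by (intro continuous_intros dcont)
  obtain c where c: "c > 0" "\<And>z. c * norm z \<le> nrm z" using nrm_lower[OF norm] by blast
  define S where "S = X \<inter> F -` {..F x}"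
  have Sc: "closed S" unfolding S_def by (rule continuous_closed_preimage[OF Fcont Xc]) simp
  define r where "r = 2 * norm y / c\<^sup>2"
  have Sb: "S \<subseteq> cball x r"
  proof
    fix u assume "u \<in> S"
    then have u: "u \<in> X" "F u \<le> F x" by (auto simp: S_def)
    have Fx: "F x = y \<bullet> x" by (simp add: F_def bregman_def)
    have b: "bregman d d' x u \<ge> (nrm (u - x))\<^sup>2 / 2" by (rule bregman_strong[OF dd X x u(1) ds norm])
    have "c * norm (u - x) \<le> nrm (u - x)" by (rule c(2))
    then have "(c * norm (u - x))\<^sup>2 \<le> (nrm (u - x))\<^sup>2"
      using c(1) by (intro power_mono) auto
    have yu: "y \<bullet> (u - x) \<ge> - (norm y * norm (u - x))"
      using norm_cauchy_schwarz[of "-y" "u - x"] by simp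
    have "y \<bullet> u + (c * norm (u - x))\<^sup>2 / 2 \<le> y \<bullet> x"
      using u(2) b \<open>(c * norm (u - x))\<^sup>2 \<le> (nrm (u - x))\<^sup>2\<close> unfolding F_def Fx[unfolded F_def] by linarith
    then have "(c * norm (u - x))\<^sup>2 / 2 \<le> norm y * norm (u - x)"
      using yu by (simp add: inner_diff_right)
    then have "norm (u - x) * (c\<^sup>2 * norm (u - x)) \<le> norm (u - x) * (2 * norm y)"
      by (simp add: power2_eq_square algebra_simps)
    then have "c\<^sup>2 * norm (u - x) \<le> 2 * norm y \<or> norm (u - x) = 0"
      by (metis mult_le_cancel_left norm_ge_zero order_less_le)
    then have "norm (u - x) \<le> r" unfolding r_def using c(1)
      by (auto simp: field_simps)
    then show "u \<in> cball x r" by (simp add: dist_norm norm_minus_commute)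
  qed
  have Scomp: "compact S" using Sc Sb bounded_cball bounded_subset compact_eq_bounded_closed by blast
  have Sne: "S \<noteq> {}" using x by (auto simp: S_def)
  obtain u0 where u0: "u0 \<in> S" "\<And>v. v \<in> S \<Longrightarrow> F u0 \<le> F v"
    using continuous_attains_inf[OF Scomp Sne continuous_on_subset[OF Fcont]] unfolding S_def by blast
  have "\<exists>u. u \<in> X \<and> (\<forall>v\<in>X. y \<bullet> u + bregman d d' x u \<le> y \<bullet> v + bregman d d' x v)"
  proof (intro exI conjI ballI)
    show "u0 \<in> X" using u0 by (simp add: S_def)
    fix v assume "v \<in> X"
    show "y \<bullet> u0 + bregman d d' x u0 \<le> y \<bullet> v + bregman d d' x v"
    proof (cases "v \<in> S")
      case True then show ?thesis using u0(2) by (simp add: F_def)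
    next
      case False
      then have "F v > F x" using \<open>v \<in> X\<close> by (auto simp: S_def)
      moreover have "F u0 \<le> F x" using u0(2) Sne x by (auto simp: S_def)
      ultimately show ?thesis by (simp add: F_def)
    qed
  qed
  then have M: "mirr X d d' x y \<in> X \<and> (\<forall>v\<in>X. y \<bullet> mirr X d d' x y + bregman d d' x (mirr X d d' x y)
       \<le> y \<bullet> v + bregman d d' x v)"
    unfolding mirr_def by (rule someI_ex)
  define u where "u = mirr X d d' x y"
  have uX: "u \<in> X" and umin: "\<And>v. v \<in> X \<Longrightarrow> F u \<le> F v" using M by (auto simp: u_def F_def)
  have opt: "(y + d' u - d' x) \<bullet> (v - u) \<ge> 0" if v: "v \<in> X" for v
  proof -
    define \<phi> where "\<phi> = (\<lambda>t. F (u + t *\<^sub>R (v - u)))"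
    have pin: "u + t *\<^sub>R (v - u) \<in> X" if "t \<in> {0..1}" for t
    proof -
      have "u + t *\<^sub>R (v - u) = (1 - t) *\<^sub>R u + t *\<^sub>R v" by (simp add: algebra_simps)
      then show ?thesis using that X uX v by (auto simp: convex_def)
    qed
    have dl: "((\<lambda>s. d (u + s *\<^sub>R (v - u))) has_real_derivative (d' u \<bullet> (v - u))) (at 0 within {0..1})"
      using deriv_line[OF dd X uX v, of 0] by simp
    have "(\<phi> has_real_derivative (y \<bullet> (v - u) + d' u \<bullet> (v - u) - d' x \<bullet> (v - u))) (at 0 within {0..1})"
    proof -
      have e: "\<phi> = (\<lambda>t. y \<bullet> u + t * (y \<bullet> (v - u)) + d (u + t *\<^sub>R (v - u)) - d x
                 - d' x \<bullet> (u - x) - t * (d' x \<bullet> (v - u)))"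
        unfolding \<phi>_def F_def bregman_def
        by (auto simp: fun_eq_iff inner_add_right inner_diff_right algebra_simps)
      show ?thesis unfolding e
        by (rule derivative_eq_intros dl | simp)+
    qed
    moreover have "\<phi> 0 \<le> \<phi> t" if "t \<in> {0..1}" for t
      unfolding \<phi>_def using umin[OF pin[OF that]] by simp
    ultimately have "0 \<le> y \<bullet> (v - u) + d' u \<bullet> (v - u) - d' x \<bullet> (v - u)"
      by (rule min_deriv)
    then show ?thesis by (simp add: inner_add_left inner_diff_left)
  qed
  show ?thesis using uX opt unfolding u_def by blast
qed


lemma step_ineq:
  fixes d :: "'a::euclidean_space \<Rightarrow> real"
  assumes dd: "\<forall>z\<in>X. (d has_derivative (\<lambda>v. d' z \<bullet> v)) (at z within X)"
    and Xc: "closed X" and X: "convex X" and x: "x \<in> X" and v: "v \<in> X"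
    and ds: "\<forall>x\<in>X. \<forall>y\<in>X. (d' x - d' y) \<bullet> (x - y) \<ge> (nrm (x - y))\<^sup>2"
    and norm: "is_norm nrm" and h: "h \<ge> 0"
  shows "h * (s \<bullet> (x - v)) \<le> h\<^sup>2 * (dual_norm nrm s)\<^sup>2 / 2 + bregman d d' x v
           - bregman d d' (mirr X d d' x (h *\<^sub>R s)) v"
proof -
  define u where "u = mirr X d d' x (h *\<^sub>R s)"
  have uX: "u \<in> X" and opt: "(h *\<^sub>R s + d' u - d' x) \<bullet> (v - u) \<ge> 0"
    using mirr_prop[OF dd Xc X x ds norm, of "h *\<^sub>R s"] v unfolding u_def by auto
  have three: "(d' u - d' x) \<bullet> (v - u) = bregman d d' x v - bregman d d' u v - bregman d d' x u"
    unfolding bregman_def by (simp add: inner_diff_left inner_diff_right algebra_simps)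
  have A: "h * (s \<bullet> (u - v)) \<le> (d' u - d' x) \<bullet> (v - u)"
    using opt by (simp add: inner_add_left inner_diff_left inner_diff_right algebra_simps)
  define M where "M = dual_norm nrm s"
  define n where "n = nrm (x - u)"
  have B: "h * (s \<bullet> (x - u)) \<le> h * (M * n)"
    using dual_norm_prop(1)[OF norm, of s "x - u"] h unfolding M_def n_def
    by (simp add: mult_left_mono)
  have Cc: "bregman d d' x u \<ge> n\<^sup>2 / 2"
    using bregman_strong[OF dd X x uX ds norm] nrm_basic(3)[OF norm, of u x] unfolding n_def by simp
  have E: "h * (M * n) - n\<^sup>2 / 2 \<le> h\<^sup>2 * M\<^sup>2 / 2"
  proof -
    have "0 \<le> (h * M - n)\<^sup>2" by simp
    then show ?thesis by (simp add: power2_eq_square algebra_simps)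
  qed
  have "h * (s \<bullet> (x - v)) = h * (s \<bullet> (x - u)) + h * (s \<bullet> (u - v))"
    by (simp add: inner_diff_right algebra_simps)
  then show ?thesis using A B Cc E three unfolding u_def[symmetric] M_def[symmetric] by linarith
qed


theorem theorem1:
  fixes X :: "'a::euclidean_space set"
    and nrm :: "'a \<Rightarrow> real"
    and f g d :: "'a \<Rightarrow> real"
    and df dg d' :: "'a \<Rightarrow> 'a"
    and x0 xstar :: 'a
    and eps \<Theta>0 :: real
    and N :: nat
  assumes norm: "is_norm nrm"
    and X: "closed X" "convex X"
    and fconv: "convex_on X f" and gconv: "convex_on X g"
    and fsub: "\<forall>x\<in>X. \<forall>y\<in>X. f y \<ge> f x + df x \<bullet> (y - x)"
    and gsub: "\<forall>x\<in>X. \<forall>y\<in>X. g y \<ge> g x + dg x \<bullet> (y - x)"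
    and flip: "\<exists>L. \<forall>x\<in>X. \<forall>y\<in>X. \<bar>f x - f y\<bar> \<le> L * nrm (x - y)"
    and glip: "\<exists>L. \<forall>x\<in>X. \<forall>y\<in>X. \<bar>g x - g y\<bar> \<le> L * nrm (x - y)"
    and xstar: "xstar \<in> X" "g xstar \<le> 0" "\<forall>x\<in>X. g x \<le> 0 \<longrightarrow> f xstar \<le> f x"
    and dderiv: "\<forall>x\<in>X. (d has_derivative (\<lambda>v. d' x \<bullet> v)) (at x within X)"
    and dcont: "continuous_on X d'"
    and dstrong: "\<forall>x\<in>X. \<forall>y\<in>X. (d' x - d' y) \<bullet> (x - y) \<ge> (nrm (x - y))\<^sup>2"
    and x0: "x0 \<in> X" "\<forall>x\<in>X. d x0 \<le> d x"
    and Theta: "\<Theta>0 > 0" "d xstar - d x0 \<le> \<Theta>0\<^sup>2"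
    and eps: "eps > 0"
    and nonzero: "\<forall>i<N. md_dir eps g df dg (md_iter eps X d d' nrm g df dg x0 i) \<noteq> 0"
    and stop: "(\<Sum>i<N. 1 / (dual_norm nrm (md_dir eps g df dg
                   (md_iter eps X d d' nrm g df dg x0 i)))\<^sup>2) \<ge> 2 * \<Theta>0\<^sup>2 / eps\<^sup>2"
    and first: "\<forall>k<N. (\<Sum>i<k. 1 / (dual_norm nrm (md_dir eps g df dg
                   (md_iter eps X d d' nrm g df dg x0 i)))\<^sup>2) < 2 * \<Theta>0\<^sup>2 / eps\<^sup>2"
  shows "let xs = md_iter eps X d d' nrm g df dg x0;
             Ms = (\<lambda>i. dual_norm nrm (md_dir eps g df dg (xs i)));
             h = (\<lambda>i. eps / (Ms i)\<^sup>2);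
             I = {i. i < N \<and> g (xs i) \<le> eps};
             xbar = (\<Sum>i\<in>I. h i *\<^sub>R xs i) /\<^sub>R (\<Sum>i\<in>I. h i)
         in I \<noteq> {} \<and> f xbar - f xstar \<le> eps \<and> g xbar \<le> eps \<and>
            (\<forall>M>0. real N / M\<^sup>2 = (\<Sum>i<N. 1 / (Ms i)\<^sup>2) \<longrightarrow>
                   real N \<ge> 2 * M\<^sup>2 * \<Theta>0\<^sup>2 / eps\<^sup>2)"
proof -
  define xs where "xs = md_iter eps X d d' nrm g df dg x0"
  define s where "s = (\<lambda>i. md_dir eps g df dg (xs i))"
  define Ms where "Ms = (\<lambda>i. dual_norm nrm (s i))"
  define h where "h = (\<lambda>i. eps / (Ms i)\<^sup>2)"
  define I where "I = {i. i < N \<and> g (xs i) \<le> eps}"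
  define H where "H = (\<Sum>i\<in>I. h i)"
  define xbar where "xbar = (\<Sum>i\<in>I. h i *\<^sub>R xs i) /\<^sub>R H"
  define S where "S = (\<Sum>i<N. 1 / (Ms i)\<^sup>2)"
  have xsS: "xs (Suc i) = mirr X d d' (xs i) (h i *\<^sub>R s i)" for i
    by (simp add: xs_def s_def Ms_def h_def Let_def)
  have xsX: "xs i \<in> X" for i
  proof (induction i)
    case 0 then show ?case using x0 by (simp add: xs_def)
  next
    case (Suc i) then show ?case
      using mirr_prop[OF dderiv X(1) X(2) Suc dstrong norm] by (simp add: xsS)
  qed
  have Msp: "Ms i > 0" if "i < N" for i
    using dual_norm_prop(3)[OF norm] nonzero that unfolding Ms_def s_def xs_def by blast
  have h0: "h i \<ge> 0" for i unfolding h_def using eps by simp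
  have hp: "h i > 0" if "i < N" for i unfolding h_def using eps Msp[OF that] by simp
  have tele: "(\<Sum>i<n. h i * (s i \<bullet> (xs i - xstar))) \<le> (\<Sum>i<n. (h i)\<^sup>2 * (Ms i)\<^sup>2 / 2)
      + bregman d d' x0 xstar - bregman d d' (xs n) xstar" for n
  proof (induction n)
    case 0 then show ?case by (simp add: xs_def)
  next
    case (Suc n)
    have "h n * (s n \<bullet> (xs n - xstar)) \<le> (h n)\<^sup>2 * (Ms n)\<^sup>2 / 2 + bregman d d' (xs n) xstar
        - bregman d d' (xs (Suc n)) xstar"
      using step_ineq[OF dderiv X(1) X(2) xsX xstar(1) dstrong norm h0, of n "s n"]
      unfolding xsS Ms_def by simp
    with Suc show ?case by simp
  qed
  have hsq: "(h i)\<^sup>2 * (Ms i)\<^sup>2 / 2 = eps\<^sup>2 / 2 * (1 / (Ms i)\<^sup>2)" if "i < N" for i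
    using Msp[OF that] unfolding h_def by (simp add: field_simps power2_eq_square)
  have Bnn: "bregman d d' (xs N) xstar \<ge> 0"
    using bregman_strong[OF dderiv X(2) xsX xstar(1) dstrong norm, of N] using zero_le_power2[of "nrm (xstar - xs N)"] by linarith
  have d0: "d' x0 \<bullet> (xstar - x0) \<ge> 0"
  proof -
    have "((\<lambda>t. d (x0 + t *\<^sub>R (xstar - x0))) has_real_derivative (d' x0 \<bullet> (xstar - x0))) (at 0 within {0..1})"
      using deriv_line[OF dderiv X(2) x0(1) xstar(1), of 0] by simp
    moreover have "d (x0 + 0 *\<^sub>R (xstar - x0)) \<le> d (x0 + t *\<^sub>R (xstar - x0))" if "t \<in> {0..1}" for t
    proof -
      have "x0 + t *\<^sub>R (xstar - x0) = (1 - t) *\<^sub>R x0 + t *\<^sub>R xstar" by (simp add: algebra_simps)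
      then have "x0 + t *\<^sub>R (xstar - x0) \<in> X" using that X(2) x0(1) xstar(1) by (auto simp: convex_def)
      then show ?thesis using x0(2) by simp
    qed
    ultimately show ?thesis by (rule min_deriv)
  qed
  have B0: "bregman d d' x0 xstar \<le> \<Theta>0\<^sup>2" using d0 Theta(2) unfolding bregman_def by simp
  have Sst: "S \<ge> 2 * \<Theta>0\<^sup>2 / eps\<^sup>2" using stop unfolding S_def Ms_def s_def xs_def .
  then have ThS: "\<Theta>0\<^sup>2 \<le> eps\<^sup>2 / 2 * S" using eps by (simp add: field_simps)
  have sumh: "(\<Sum>i<N. (h i)\<^sup>2 * (Ms i)\<^sup>2 / 2) = eps\<^sup>2 / 2 * S"
    unfolding S_def sum_distrib_left by (rule sum.cong) (auto simp: hsq)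
  have epsS: "eps\<^sup>2 * S = eps * (\<Sum>i<N. h i)"
    unfolding S_def h_def sum_distrib_left by (rule sum.cong) (auto simp: power2_eq_square)
  define a where "a = (\<lambda>i. h i * (s i \<bullet> (xs i - xstar)))"
  have upper: "(\<Sum>i<N. a i) \<le> eps * (\<Sum>i<N. h i)"
  proof -
    have "eps\<^sup>2 / 2 * S + eps\<^sup>2 / 2 * S = eps\<^sup>2 * S" by simp
    then show ?thesis using tele[of N] sumh Bnn B0 ThS epsS unfolding a_def by linarith
  qed
  define b where "b = (\<lambda>i. if g (xs i) \<le> eps then h i * (f (xs i) - f xstar) else eps * h i)"
  have ab: "b i \<le> a i" if "i < N" for i
  proof (cases "g (xs i) \<le> eps")
    case True
    then have "s i = df (xs i)" by (simp add: s_def md_dir_def)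
    moreover have "f xstar \<ge> f (xs i) + df (xs i) \<bullet> (xstar - xs i)" using fsub xsX xstar(1) by blast
    ultimately have "s i \<bullet> (xs i - xstar) \<ge> f (xs i) - f xstar"
      by (simp add: inner_diff_right)
    then show ?thesis using True h0[of i] by (simp add: a_def b_def mult_left_mono)
  next
    case False
    then have "s i = dg (xs i)" by (simp add: s_def md_dir_def)
    moreover have "g xstar \<ge> g (xs i) + dg (xs i) \<bullet> (xstar - xs i)" using gsub xsX xstar(1) by blast
    ultimately have "s i \<bullet> (xs i - xstar) > eps"
      using False xstar(2) by (simp add: inner_diff_right)
    then show ?thesis using False hp[OF that] by (simp add: a_def b_def)
  qed
  have ab_strict: "b i < a i" if "i < N" "\<not> g (xs i) \<le> eps" for i
  proof -
    have "s i = dg (xs i)" using that by (simp add: s_def md_dir_def)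
    moreover have "g xstar \<ge> g (xs i) + dg (xs i) \<bullet> (xstar - xs i)" using gsub xsX xstar(1) by blast
    ultimately have "s i \<bullet> (xs i - xstar) > eps"
      using that xstar(2) by (simp add: inner_diff_right)
    then show ?thesis using that hp[OF that(1)] by (simp add: a_def b_def)
  qed
  have Npos: "N > 0"
  proof (rule ccontr)
    assume "\<not> N > 0"
    then have "N = 0" by simp
    then have "S = 0" by (simp add: S_def)
    moreover have "2 * \<Theta>0\<^sup>2 / eps\<^sup>2 > 0" using Theta(1) eps by simp
    ultimately show False using Sst by simp
  qed
  have Ine: "I \<noteq> {}"
  proof
    assume "I = {}"
    then have "\<And>i. i < N \<Longrightarrow> \<not> g (xs i) \<le> eps" by (auto simp: I_def)
    then have "(\<Sum>i<N. b i) < (\<Sum>i<N. a i)"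
      using Npos by (intro sum_strict_mono ab_strict) auto
    moreover have "(\<Sum>i<N. b i) = eps * (\<Sum>i<N. h i)"
      unfolding sum_distrib_left b_def using \<open>\<And>i. i < N \<Longrightarrow> \<not> g (xs i) \<le> eps\<close>
      by (intro sum.cong) auto
    ultimately show False using upper by simp
  qed
  have Ieq: "{..<N} \<inter> {i. g (xs i) \<le> eps} = I" by (auto simp: I_def)
  have sb: "(\<Sum>i<N. b i) = (\<Sum>i\<in>I. h i * (f (xs i) - f xstar)) + (\<Sum>i\<in>{..<N} - I. eps * h i)"
  proof -
    have Ieq2: "{..<N} \<inter> - {i. g (xs i) \<le> eps} = {..<N} - I" by (auto simp: I_def)
    show ?thesis unfolding b_def by (subst sum.If_cases) (simp_all add: Ieq Ieq2)
  qed
  have shh: "(\<Sum>i<N. h i) = (\<Sum>i\<in>I. h i) + (\<Sum>i\<in>{..<N} - I. h i)"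
  proof -
    have "I \<subseteq> {..<N}" by (auto simp: I_def)
    then show ?thesis using sum.subset_diff[of I "{..<N}" h] by simp
  qed
  have "(\<Sum>i<N. b i) \<le> (\<Sum>i<N. a i)" by (intro sum_mono ab) auto
  then have fI: "(\<Sum>i\<in>I. h i * (f (xs i) - f xstar)) \<le> eps * H"
    using upper sb shh unfolding H_def by (simp add: sum_distrib_left algebra_simps)
  have finI: "finite I" by (simp add: I_def)
  have Hp: "H > 0" unfolding H_def using finI Ine hp
    by (intro sum_pos) (auto simp: I_def)
  define w where "w = (\<lambda>i. h i / H)"
  have xbar_eq: "xbar = (\<Sum>i\<in>I. w i *\<^sub>R xs i)"
    unfolding xbar_def w_def by (simp add: scaleR_sum_right divide_inverse_commute)
  have wsum: "(\<Sum>i\<in>I. w i) = 1" unfolding w_def H_def using Hp H_def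
    by (simp add: sum_divide_distrib[symmetric])
  have w0: "w i \<ge> 0" for i unfolding w_def using h0[of i] Hp by simp
  have fJ: "f xbar \<le> (\<Sum>i\<in>I. w i * f (xs i))"
    unfolding xbar_eq by (rule convex_on_sum[OF finI Ine fconv wsum w0 xsX])
  have gJ: "g xbar \<le> (\<Sum>i\<in>I. w i * g (xs i))"
    unfolding xbar_eq by (rule convex_on_sum[OF finI Ine gconv wsum w0 xsX])
  have "(\<Sum>i\<in>I. w i * f (xs i)) - f xstar = (\<Sum>i\<in>I. w i * f (xs i)) - (\<Sum>i\<in>I. w i) * f xstar"
    using wsum by simp
  also have "\<dots> = (\<Sum>i\<in>I. w i * (f (xs i) - f xstar))"
    by (simp add: sum_distrib_right sum_subtractf right_diff_distrib)
  also have "\<dots> = (\<Sum>i\<in>I. h i * (f (xs i) - f xstar)) / H"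
    by (simp add: w_def sum_divide_distrib)
  also have "\<dots> \<le> eps" using fI Hp by (simp add: divide_le_eq mult.commute)
  finally have fres: "f xbar - f xstar \<le> eps" using fJ by simp
  have "(\<Sum>i\<in>I. w i * g (xs i)) \<le> (\<Sum>i\<in>I. w i * eps)"
    by (intro sum_mono mult_left_mono w0) (auto simp: I_def)
  also have "\<dots> = eps" using wsum by (simp add: sum_distrib_right[symmetric])
  finally have gres: "g xbar \<le> eps" using gJ by simp
  have Mres: "real N \<ge> 2 * M\<^sup>2 * \<Theta>0\<^sup>2 / eps\<^sup>2" if "M > 0" "real N / M\<^sup>2 = S" for M
  proof -
    have "real N = S * M\<^sup>2" using that by (simp add: field_simps)
    also have "\<dots> \<ge> 2 * \<Theta>0\<^sup>2 / eps\<^sup>2 * M\<^sup>2" using mult_right_mono[OF Sst, of "M\<^sup>2"] by simp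
    finally show ?thesis by (simp add: mult.assoc mult.commute[of "M\<^sup>2" "\<Theta>0\<^sup>2"])
  qed
  have main: "I \<noteq> {} \<and> f xbar - f xstar \<le> eps \<and> g xbar \<le> eps \<and>
      (\<forall>M>0. real N / M\<^sup>2 = S \<longrightarrow> real N \<ge> 2 * M\<^sup>2 * \<Theta>0\<^sup>2 / eps\<^sup>2)"
    using Ine fres gres Mres by blast
  show ?thesis
    using main unfolding Let_def xbar_def H_def I_def h_def Ms_def s_def xs_def S_def .
qed

end
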